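(* Let $G$ be a plane graph with at least $174$ vertices containing no subgraph isomorphic to $C_3\dot\cup\Theta_4$. Then for any two edges $e,f\in E_I(G)$ having no common endpoint, $|V(\Theta_e)\cap V(\Theta_f)|\ge 2$.
   Context: $\Theta_4$ is $K_4$ minus one edge and $C_3\dot\cup\Theta_4$ is its vertex-disjoint union with a triangle. For a plane graph $G$, a 3-face is a face whose boundary has length 3; $E_I(G)$ is the set of edges of $G$ that lie on the boundaries of two 3-faces. For $e\in E_I(G)$, $\Theta_e$ denotes the subgraph formed by the union of the two 3-faces incident with $e$ (a copy of $\Theta_4$ on four vertices). *)

theory Defs
  imports "HOL-Analysis.Analysis"
begin

text \<open>A finite simple graph with vertex set V and edge set E (edges are 2-element
  subsets of V), drawn in the plane (identified with the complex numbers):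
  vertex v is drawn at the point p v, edge e is drawn as the arc g e.\<close>

definition simple_graph :: "'a set \<Rightarrow> 'a set set \<Rightarrow> bool" where
  "simple_graph V E \<longleftrightarrow> finite V \<and> (\<forall>e\<in>E. \<exists>u v. u \<noteq> v \<and> u \<in> V \<and> v \<in> V \<and> e = {u, v})"

definition plane_embedding ::
  "'a set \<Rightarrow> 'a set set \<Rightarrow> ('a \<Rightarrow> complex) \<Rightarrow> ('a set \<Rightarrow> real \<Rightarrow> complex) \<Rightarrow> bool" where
  "plane_embedding V E p g \<longleftrightarrow>
     simple_graph V E \<and>
     inj_on p V \<and>
     (\<forall>e\<in>E. arc (g e) \<and> {pathstart (g e), pathfinish (g e)} = p ` e) \<and>
     (\<forall>e\<in>E. \<forall>v\<in>V. p v \<in> path_image (g e) \<longrightarrow> v \<in> e) \<and>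
     (\<forall>e\<in>E. \<forall>e'\<in>E. e \<noteq> e' \<longrightarrow> path_image (g e) \<inter> path_image (g e') \<subseteq> p ` (e \<inter> e'))"

definition drawing ::
  "'a set \<Rightarrow> 'a set set \<Rightarrow> ('a \<Rightarrow> complex) \<Rightarrow> ('a set \<Rightarrow> real \<Rightarrow> complex) \<Rightarrow> complex set" where
  "drawing V E p g = p ` V \<union> (\<Union>e\<in>E. path_image (g e))"

definition is_face ::
  "'a set \<Rightarrow> 'a set set \<Rightarrow> ('a \<Rightarrow> complex) \<Rightarrow> ('a set \<Rightarrow> real \<Rightarrow> complex) \<Rightarrow> complex set \<Rightarrow> bool" where
  "is_face V E p g F \<longleftrightarrow>
     (\<exists>x. x \<notin> drawing V E p g \<and> F = connected_component_set (- drawing V E p g) x)"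

definition three_face ::
  "'a set \<Rightarrow> 'a set set \<Rightarrow> ('a \<Rightarrow> complex) \<Rightarrow> ('a set \<Rightarrow> real \<Rightarrow> complex) \<Rightarrow> complex set \<Rightarrow> 'a set \<Rightarrow> bool" where
  "three_face V E p g F T \<longleftrightarrow>
     is_face V E p g F \<and> T \<subseteq> V \<and> card T = 3 \<and>
     (\<forall>u\<in>T. \<forall>v\<in>T. u \<noteq> v \<longrightarrow> {u, v} \<in> E) \<and>
     frontier F = (\<Union>e\<in>{e\<in>E. e \<subseteq> T}. path_image (g e))"

definition EI :: "'a set \<Rightarrow> 'a set set \<Rightarrow> ('a \<Rightarrow> complex) \<Rightarrow> ('a set \<Rightarrow> real \<Rightarrow> complex) \<Rightarrow> 'a set set" where
  "EI V E p g = {e\<in>E. \<exists>F1 F2 T1 T2. F1 \<noteq> F2 \<and> three_face V E p g F1 T1 \<and> three_face V E p g F2 T2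
                        \<and> e \<subseteq> T1 \<and> e \<subseteq> T2}"

text \<open>Containment of a (not necessarily induced) subgraph isomorphic to the disjoint
  union of a triangle and Theta_4 = K_4 minus an edge.\<close>
definition has_C3_Theta4 :: "'a set \<Rightarrow> 'a set set \<Rightarrow> bool" where
  "has_C3_Theta4 V E \<longleftrightarrow>
     (\<exists>a b c w x y z. distinct [a, b, c, w, x, y, z] \<and> {a, b, c, w, x, y, z} \<subseteq> V \<and>
        {a, b} \<in> E \<and> {b, c} \<in> E \<and> {a, c} \<in> E \<and>
        {w, x} \<in> E \<and> {w, y} \<in> E \<and> {w, z} \<in> E \<and> {x, y} \<in> E \<and> {x, z} \<in> E)"

end

theory Submission
  imports Defs
begin

lemma face_eq_side:
  fixes F I Ou C :: "complex set"
  assumes "connected F" "F \<noteq> {}" "F \<inter> C = {}" "frontier F = C"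
    "I \<union> Ou = - C" "I \<inter> Ou = {}" "frontier I = C" "frontier Ou = C"
    "connected I" "connected Ou"
  shows "F = I \<or> F = Ou"
proof -
  have sub: "F \<subseteq> I \<or> F \<subseteq> Ou"
  proof (rule ccontr)
    assume "\<not> ?thesis"
    then have "F \<inter> I \<noteq> {}" "F - I \<noteq> {}" using assms by blast+
    then have "F \<inter> frontier I \<noteq> {}" using connected_Int_frontier assms(1) by blast
    then show False using assms by blast
  qed
  have eq: "F = X" if "F \<subseteq> X" "connected X" "X \<inter> C = {}" for X
  proof (rule ccontr)
    assume "F \<noteq> X"
    then have "X \<inter> F \<noteq> {}" "X - F \<noteq> {}" using that assms(2) by blast+
    then have "X \<inter> frontier F \<noteq> {}" using connected_Int_frontier that(2) by blast
    then show False using assms that by blast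
  qed
  have "I \<inter> C = {}" "Ou \<inter> C = {}" using assms(5) by blast+
  then show ?thesis using sub eq assms by blast
qed

lemma pe_parts:
  assumes "plane_embedding V E p g"
  shows "simple_graph V E" "inj_on p V"
    "\<And>e. e\<in>E \<Longrightarrow> arc (g e)" "\<And>e. e\<in>E \<Longrightarrow> {pathstart (g e), pathfinish (g e)} = p ` e"
    "\<And>e v. e\<in>E \<Longrightarrow> v\<in>V \<Longrightarrow> p v \<in> path_image (g e) \<Longrightarrow> v \<in> e"
    "\<And>e e'. e\<in>E \<Longrightarrow> e'\<in>E \<Longrightarrow> e \<noteq> e' \<Longrightarrow> path_image (g e) \<inter> path_image (g e') \<subseteq> p ` (e \<inter> e')"
  using assms unfolding plane_embedding_def by simp_all

lemma orient:
  assumes pe: "plane_embedding V E p g" and "{a, b} \<in> E" "a \<noteq> b"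
  shows "\<exists>h. arc h \<and> pathstart h = p a \<and> pathfinish h = p b \<and> path_image h = path_image (g {a,b})"
proof -
  have ab: "a \<in> V" "b \<in> V" using pe_parts(1)[OF pe] assms(2) unfolding simple_graph_def
    by (metis doubleton_eq_iff)+
  have "p a \<noteq> p b" using pe_parts(2)[OF pe] assms(3) ab by (meson inj_onD)
  moreover have "arc (g {a,b})" "{pathstart (g {a,b}), pathfinish (g {a,b})} = {p a, p b}"
    using pe_parts(3,4)[OF pe assms(2)] by auto
  ultimately show ?thesis
    by (metis arc_reversepath doubleton_eq_iff path_image_reversepath pathfinish_reversepath pathstart_reversepath)
qed

lemma tri_loop:
  assumes pe: "plane_embedding V E p g" and E: "{a, b} \<in> E" "{b, c} \<in> E" "{a, c} \<in> E"
    and d: "a \<noteq> b" "b \<noteq> c" "a \<noteq> c"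
  shows "\<exists>h. simple_path h \<and> pathfinish h = pathstart h \<and>
     path_image h = path_image (g {a,b}) \<union> path_image (g {b,c}) \<union> path_image (g {a,c})"
proof -
  have ca: "{c, a} \<in> E" using E by (simp add: insert_commute)
  obtain h1 where h1: "arc h1" "pathstart h1 = p a" "pathfinish h1 = p b" "path_image h1 = path_image (g {a,b})"
    using orient[OF pe E(1) d(1)] by blast
  obtain h2 where h2: "arc h2" "pathstart h2 = p b" "pathfinish h2 = p c" "path_image h2 = path_image (g {b,c})"
    using orient[OF pe E(2) d(2)] by blast
  obtain h3 where h3: "arc h3" "pathstart h3 = p c" "pathfinish h3 = p a" "path_image h3 = path_image (g {c,a})"
    using orient[OF pe ca] d by metis
  have inter: "\<And>e e'. e \<in> E \<Longrightarrow> e' \<in> E \<Longrightarrow> e \<noteq> e' \<Longrightarrow> path_image (g e) \<inter> path_image (g e') \<subseteq> p ` (e \<inter> e')"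
    using pe_parts(6)[OF pe] by blast
  have ne: "{a,b} \<noteq> {b,c}" "{b,c} \<noteq> {c,a}" "{a,b} \<noteq> {c,a}" using d by (auto simp: doubleton_eq_iff)
  have i12: "path_image h1 \<inter> path_image h2 \<subseteq> {pathstart h2}"
    using inter[OF E(1) E(2) ne(1)] h1 h2 d by auto
  have i23: "path_image h2 \<inter> path_image h3 \<subseteq> {pathstart h3}"
    using inter[OF E(2) ca ne(2)] h2 h3 d by auto
  have i13: "path_image h1 \<inter> path_image h3 \<subseteq> {pathstart h1} \<inter> {pathfinish h3}"
    using inter[OF E(1) ca ne(3)] h1 h3 d by auto
  have sp: "simple_path (h1 +++ h2 +++ h3)"
    by (rule simple_path_join3I) (use h1 h2 h3 i12 i23 i13 in auto)
  show ?thesis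
    apply (rule exI[of _ "h1 +++ h2 +++ h3"])
    using sp h1 h2 h3 by (auto simp: path_image_join insert_commute)
qed

lemma two_faces_same:
  assumes pe: "plane_embedding V E p g"
    and f1: "three_face V E p g F1 T" and f2: "three_face V E p g F2 T" and ne: "F1 \<noteq> F2"
  shows "V \<subseteq> T"
proof -
  have sg: "simple_graph V E" using pe_parts(1)[OF pe] .
  from f1 have T: "T \<subseteq> V" "card T = 3" "\<forall>u\<in>T. \<forall>v\<in>T. u \<noteq> v \<longrightarrow> {u, v} \<in> E"
    unfolding three_face_def by auto
  obtain a b c where abc: "T = {a,b,c}" "a \<noteq> b" "b \<noteq> c" "a \<noteq> c"
    using T(2) card_3_iff by metis
  have E: "{a, b} \<in> E" "{b, c} \<in> E" "{a, c} \<in> E" using T(3) abc by auto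
  have ET: "{e\<in>E. e \<subseteq> T} = {{a,b},{b,c},{a,c}}"
  proof
    show "{e\<in>E. e \<subseteq> T} \<subseteq> {{a,b},{b,c},{a,c}}"
    proof
      fix e assume "e \<in> {e\<in>E. e \<subseteq> T}"
      then obtain u v where "u \<noteq> v" "e = {u,v}" "e \<subseteq> T" using sg unfolding simple_graph_def by blast
      then show "e \<in> {{a,b},{b,c},{a,c}}" using abc by (auto simp: insert_commute)
    qed
  qed (use E abc in auto)
  define C where "C = (\<Union>e\<in>{e\<in>E. e \<subseteq> T}. path_image (g e))"
  have C: "C = path_image (g {a,b}) \<union> path_image (g {b,c}) \<union> path_image (g {a,c})"
    unfolding C_def ET by (simp add: Un_assoc)
  obtain h where h: "simple_path h" "pathfinish h = pathstart h" "path_image h = C"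
  proof -
    obtain h' where h': "simple_path h'" "pathfinish h' = pathstart h'"
       "path_image h' = path_image (g {a,b}) \<union> path_image (g {b,c}) \<union> path_image (g {a,c})"
      using tri_loop[OF pe E abc(2-4)] by blast
    have hC: "path_image h' = C" using h'(3) C by simp
    show ?thesis by (rule that[OF h'(1,2) hC])
  qed
  note J = Jordan_inside_outside[OF h(1,2), unfolded h(3)]
  have J': "inside C \<union> outside C = - C" "inside C \<inter> outside C = {}"
    "frontier (inside C) = C" "frontier (outside C) = C"
    "connected (inside C)" "connected (outside C)" using J by blast+
  define D where "D = drawing V E p g"
  have CD: "C \<subseteq> D" unfolding C_def D_def drawing_def by blast
  have side: "F = inside C \<or> F = outside C" if tf: "three_face V E p g F T" for F
  proof -
    obtain x where x: "x \<notin> D" "F = connected_component_set (- D) x"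
      using tf unfolding three_face_def is_face_def D_def by blast
    have c1: "connected F" using x by simp
    have "x \<in> F" using x by (simp add: connected_component_refl_eq)
    then have c2: "F \<noteq> {}" by blast
    have "F \<subseteq> - D" using x connected_component_subset by blast
    then have c3: "F \<inter> C = {}" using CD by blast
    have c4: "frontier F = C"
      using tf[unfolded three_face_def, THEN conjunct2, THEN conjunct2, THEN conjunct2, THEN conjunct2]
      unfolding C_def .
    show ?thesis
      by (rule face_eq_side[OF c1 c2 c3 c4 J'(1-6)])
  qed
  have "F1 \<union> F2 = inside C \<union> outside C"
    using side[OF f1] side[OF f2] ne by (metis sup_commute)
  then have U: "F1 \<union> F2 = - C" using J'(1) by simp
  have FD: "F \<subseteq> - D" if tf: "three_face V E p g F T" for F
  proof -
    obtain x where x: "x \<notin> D" "F = connected_component_set (- D) x"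
      using tf unfolding three_face_def is_face_def D_def by blast
    then show ?thesis using connected_component_subset by blast
  qed
  have "F1 \<union> F2 \<subseteq> - D" using FD[OF f1] FD[OF f2] by (rule Un_least)
  then have "D \<subseteq> C" unfolding U by blast
  have vert: "\<And>e v. e \<in> E \<Longrightarrow> v \<in> V \<Longrightarrow> p v \<in> path_image (g e) \<Longrightarrow> v \<in> e"
    using pe_parts(5)[OF pe] by blast
  show "V \<subseteq> T"
  proof
    fix v assume v: "v \<in> V"
    then have "p v \<in> D" unfolding D_def drawing_def by blast
    then have "p v \<in> C" using \<open>D \<subseteq> C\<close> by blast
    then obtain e where "e \<in> E" "e \<subseteq> T" "p v \<in> path_image (g e)" unfolding C_def by blast
    then show "v \<in> T" using vert v by blast
  qed
qed


lemma comb: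
  assumes nh: "\<not> has_C3_Theta4 V E"
    and d1: "distinct [a,b,c,d]" and d2: "distinct [x,y,z,w]"
    and V: "{a,b,c,d,x,y,z,w} \<subseteq> V"
    and E1: "{a,b} \<in> E" "{b,c} \<in> E" "{a,c} \<in> E" "{a,d} \<in> E" "{b,d} \<in> E"
    and E2: "{x,y} \<in> E" "{y,z} \<in> E" "{x,z} \<in> E" "{x,w} \<in> E" "{y,w} \<in> E"
    and dj: "{a,b} \<inter> {x,y} = {}"
  shows "card ({a,b,c,d} \<inter> {x,y,z,w}) \<ge> 2"
proof (rule ccontr)
  assume "\<not> ?thesis"
  then have "card ({a,b,c,d} \<inter> {x,y,z,w}) \<le> Suc 0" by simp
  then have one: "\<And>u v. u \<in> {a,b,c,d} \<inter> {x,y,z,w} \<Longrightarrow> v \<in> {a,b,c,d} \<inter> {x,y,z,w} \<Longrightarrow> u = v"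
  proof -
    have fin: "finite ({a,b,c,d} \<inter> {x,y,z,w})" by simp
    fix u v assume "u \<in> {a,b,c,d} \<inter> {x,y,z,w}" "v \<in> {a,b,c,d} \<inter> {x,y,z,w}"
    then show "u = v" using card_le_Suc0_iff_eq[OF fin] \<open>card ({a,b,c,d} \<inter> {x,y,z,w}) \<le> Suc 0\<close> by blast
  qed
  have A: "False" if dd: "distinct [t1,t2,t3,a,b,c,d]" and tv: "{t1,t2,t3} \<subseteq> V" and
     te: "{t1,t2} \<in> E" "{t2,t3} \<in> E" "{t1,t3} \<in> E" for t1 t2 t3
  proof -
    have h: "distinct [t1,t2,t3,a,b,c,d] \<and> {t1,t2,t3,a,b,c,d} \<subseteq> V \<and>
        {t1,t2} \<in> E \<and> {t2,t3} \<in> E \<and> {t1,t3} \<in> E \<and>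
        {a,b} \<in> E \<and> {a,c} \<in> E \<and> {a,d} \<in> E \<and> {b,c} \<in> E \<and> {b,d} \<in> E"
      using dd tv te V E1 by simp
    have "has_C3_Theta4 V E" unfolding has_C3_Theta4_def
      by (rule exI[of _ t1], rule exI[of _ t2], rule exI[of _ t3], rule exI[of _ a], rule exI[of _ b],
          rule exI[of _ c], rule exI[of _ d], rule h)
    then show False using nh by blast
  qed
  have B: "False" if dd: "distinct [t1,t2,t3,x,y,z,w]" and tv: "{t1,t2,t3} \<subseteq> V" and
     te: "{t1,t2} \<in> E" "{t2,t3} \<in> E" "{t1,t3} \<in> E" for t1 t2 t3
  proof -
    have h: "distinct [t1,t2,t3,x,y,z,w] \<and> {t1,t2,t3,x,y,z,w} \<subseteq> V \<and>
        {t1,t2} \<in> E \<and> {t2,t3} \<in> E \<and> {t1,t3} \<in> E \<and>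
        {x,y} \<in> E \<and> {x,z} \<in> E \<and> {x,w} \<in> E \<and> {y,z} \<in> E \<and> {y,w} \<in> E"
      using dd tv te V E2 by simp
    have "has_C3_Theta4 V E" unfolding has_C3_Theta4_def
      by (rule exI[of _ t1], rule exI[of _ t2], rule exI[of _ t3], rule exI[of _ x], rule exI[of _ y],
          rule exI[of _ z], rule exI[of _ w], rule h)
    then show False using nh by blast
  qed
  have 1: "{x,y,z} \<inter> {a,b,c,d} \<noteq> {}"
  proof
    assume "{x,y,z} \<inter> {a,b,c,d} = {}"
    then have "distinct [x,y,z,a,b,c,d]" using d1 d2 by auto
    then show False using A[OF _ _ E2(1,2,3)] V by blast
  qed
  have 2: "{x,y,w} \<inter> {a,b,c,d} \<noteq> {}"
  proof
    assume "{x,y,w} \<inter> {a,b,c,d} = {}"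
    then have "distinct [x,y,w,a,b,c,d]" using d1 d2 by auto
    then show False using A[OF _ _ E2(1,5,4)] V by blast
  qed
  have 3: "{a,b,c} \<inter> {x,y,z,w} \<noteq> {}"
  proof
    assume "{a,b,c} \<inter> {x,y,z,w} = {}"
    then have "distinct [a,b,c,x,y,z,w]" using d1 d2 by auto
    then show False using B[OF _ _ E1(1,2,3)] V by blast
  qed
  have 4: "{a,b,d} \<inter> {x,y,z,w} \<noteq> {}"
  proof
    assume "{a,b,d} \<inter> {x,y,z,w} = {}"
    then have "distinct [a,b,d,x,y,z,w]" using d1 d2 by auto
    then show False using B[OF _ _ E1(1,5,4)] V by blast
  qed
  obtain u1 where u1: "u1 \<in> {a,b,c,d}" "u1 \<in> {x,y,z}" using 1 by blast
  obtain u2 where u2: "u2 \<in> {a,b,c,d}" "u2 \<in> {x,y,w}" using 2 by blast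
  obtain u3 where u3: "u3 \<in> {x,y,z,w}" "u3 \<in> {a,b,c}" using 3 by blast
  obtain u4 where u4: "u4 \<in> {x,y,z,w}" "u4 \<in> {a,b,d}" using 4 by blast
  have e: "u1 = u2" "u1 = u3" "u1 = u4" using one u1 u2 u3 u4 by blast+
  have "u1 \<in> {x,y}" using u1(2) u2(2) e(1) d2 by auto
  moreover have "u1 \<in> {a,b}" using u3(2) u4(2) e(2,3) d1 by auto
  ultimately show False using dj by blast
qed


lemma tri_split:
  assumes pe: "plane_embedding V E p g" and tf: "three_face V E p g F T"
    and eE: "e \<in> E" and eT: "e \<subseteq> T"
  shows "\<exists>a b c. e = {a,b} \<and> T = {a,b,c} \<and> distinct [a,b,c]"
proof -
  have sg: "simple_graph V E" using pe_parts(1)[OF pe] .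
  obtain a b where ab: "a \<noteq> b" "e = {a,b}" using sg eE unfolding simple_graph_def by blast
  have c3: "card T = 3" "T \<subseteq> V" using tf unfolding three_face_def by auto
  have fT: "finite T" using c3(1) by (metis card.infinite zero_neq_numeral)
  have "card e = 2" "finite e" using ab by auto
  then have "card (T - e) = 1" using card_Diff_subset[OF _ eT] c3 by simp
  then obtain c where "T - e = {c}" using card_1_singletonE by blast
  then have "T = {a,b,c}" "c \<notin> {a,b}" using eT ab by auto
  then show ?thesis using ab by auto
qed

theorem lemma5:
  fixes V :: "'a set" and E :: "'a set set"
    and p :: "'a \<Rightarrow> complex" and g :: "'a set \<Rightarrow> real \<Rightarrow> complex"
  assumes "plane_embedding V E p g"
    and "card V \<ge> 174"
    and "\<not> has_C3_Theta4 V E"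
    and "e \<in> EI V E p g" and "f \<in> EI V E p g" and "e \<inter> f = {}"
    and "F1 \<noteq> F2" and "three_face V E p g F1 T1" and "three_face V E p g F2 T2"
    and "e \<subseteq> T1" and "e \<subseteq> T2"
    and "H1 \<noteq> H2" and "three_face V E p g H1 S1" and "three_face V E p g H2 S2"
    and "f \<subseteq> S1" and "f \<subseteq> S2"
  shows "card ((T1 \<union> T2) \<inter> (S1 \<union> S2)) \<ge> 2"
proof -
  note pe = assms(1)
  have fin: "finite V" using pe_parts(1)[OF pe] unfolding simple_graph_def by blast
  have eE: "e \<in> E" and fE: "f \<in> E" using assms(4,5) unfolding EI_def by auto
  have Tsub: "T \<subseteq> V" "card T = 3" "\<And>u v. u\<in>T \<Longrightarrow> v\<in>T \<Longrightarrow> u \<noteq> v \<Longrightarrow> {u, v} \<in> E"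
    if "three_face V E p g F T" for F T using that unfolding three_face_def by auto
  have neq: "T \<noteq> T'" if "F \<noteq> F'" "three_face V E p g F T" "three_face V E p g F' T'" for F F' T T'
  proof
    assume "T = T'"
    then have "V \<subseteq> T" using two_faces_same[OF pe] that by blast
    then have "card V \<le> 3" using Tsub[OF that(2)] fin by (metis card_mono finite_subset)
    then show False using assms(2) by simp
  qed
  have nT: "T1 \<noteq> T2" using neq assms(7-9) by blast
  have nS: "S1 \<noteq> S2" using neq assms(12-14) by blast
  obtain a b c where abc: "e = {a,b}" "T1 = {a,b,c}" "distinct [a,b,c]"
    using tri_split[OF pe assms(8) eE assms(10)] by blast
  obtain a' b' d where abd: "e = {a',b'}" "T2 = {a',b',d}" "distinct [a',b',d]"
    using tri_split[OF pe assms(9) eE assms(11)] by blast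
  have T2: "T2 = {a,b,d}" "d \<notin> {a,b}" using abc abd by (auto simp: doubleton_eq_iff)
  have cd: "c \<noteq> d" using nT abc T2 by auto
  obtain x y z where xyz: "f = {x,y}" "S1 = {x,y,z}" "distinct [x,y,z]"
    using tri_split[OF pe assms(13) fE assms(15)] by blast
  obtain x' y' w where xyw: "f = {x',y'}" "S2 = {x',y',w}" "distinct [x',y',w]"
    using tri_split[OF pe assms(14) fE assms(16)] by blast
  have S2: "S2 = {x,y,w}" "w \<notin> {x,y}" using xyz xyw by (auto simp: doubleton_eq_iff)
  have zw: "z \<noteq> w" using nS xyz S2 by auto
  have eT1: "{u, v} \<in> E" if "u \<in> T1" "v \<in> T1" "u \<noteq> v" for u v using Tsub(3)[OF assms(8)] that by blast
  have eT2: "{u, v} \<in> E" if "u \<in> T2" "v \<in> T2" "u \<noteq> v" for u v using Tsub(3)[OF assms(9)] that by blast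
  have eS1: "{u, v} \<in> E" if "u \<in> S1" "v \<in> S1" "u \<noteq> v" for u v using Tsub(3)[OF assms(13)] that by blast
  have eS2: "{u, v} \<in> E" if "u \<in> S2" "v \<in> S2" "u \<noteq> v" for u v using Tsub(3)[OF assms(14)] that by blast
  have d1: "distinct [a,b,c,d]" using abc T2 cd by auto
  have d2: "distinct [x,y,z,w]" using xyz S2 zw by auto
  have "card ({a,b,c,d} \<inter> {x,y,z,w}) \<ge> 2"
  proof (rule comb[OF assms(3) d1 d2])
    show "{a,b,c,d,x,y,z,w} \<subseteq> V" using Tsub(1)[OF assms(8)] Tsub(1)[OF assms(9)]
      Tsub(1)[OF assms(13)] Tsub(1)[OF assms(14)] abc(2) T2(1) xyz(2) S2(1) by blast
    show "{a,b} \<inter> {x,y} = {}" using assms(6) abc(1) xyz(1) by blast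
    show "{a,b} \<in> E" by (rule eT1) (use abc d1 in auto)
    show "{b,c} \<in> E" by (rule eT1) (use abc d1 in auto)
    show "{a,c} \<in> E" by (rule eT1) (use abc d1 in auto)
    show "{a,d} \<in> E" by (rule eT2) (use T2 d1 in auto)
    show "{b,d} \<in> E" by (rule eT2) (use T2 d1 in auto)
    show "{x,y} \<in> E" by (rule eS1) (use xyz d2 in auto)
    show "{y,z} \<in> E" by (rule eS1) (use xyz d2 in auto)
    show "{x,z} \<in> E" by (rule eS1) (use xyz d2 in auto)
    show "{x,w} \<in> E" by (rule eS2) (use S2 d2 in auto)
    show "{y,w} \<in> E" by (rule eS2) (use S2 d2 in auto)
  qed
  moreover have "(T1 \<union> T2) \<inter> (S1 \<union> S2) = {a,b,c,d} \<inter> {x,y,z,w}"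
    using abc T2 xyz S2 by auto
  ultimately show ?thesis by simp
qed

end
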